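(* Let $X$ and $Y$ be jointly spacelike slices (i.e. $X\cup Y$ is spacelike). Then the presheaf $(X\vee Y)(-):\mathsf{Slice}^{op}\to\mathsf{Set}$ is representable (namely by the slice $X\cup Y$).
   Context: Fix a connected, time-orientable Lorentzian manifold $\mathcal{M}$ with a fixed time-orientation (no further causality assumptions). A causal curve is an equivalence class, up to monotone reparametrisation, of smooth regular paths $\mu:\iota\to\mathcal{M}$ ($\iota\subseteq\mathbb{R}$ an interval) whose tangent is everywhere timelike or null; it is future-directed if the tangent is everywhere future-directed. Write $x\prec y$ if $x=y$ or there is a future-directed causal curve from $x$ to $y$. A region $A\subseteq\mathcal{M}$ is spacelike if no two distinct points $x,y\in A$ satisfy $x\prec y$. A slice is a closed spacelike subset of $\mathcal{M}$; slices $X,Y$ are jointly spacelike if $X\cup Y$ is spacelike. For regions $A,B$, $\mathcal{C}[A,B]$ is the set of future-directed causal curves passing through $A$ and then $B$: for a representative path $\mu:\iota\to\mathcal{M}$, there exists $q\in\iota$ with $\mu(q)\in B$, and for every such $q$ there exists $p\le q$ with $\mu(p)\in A$. The category $\mathsf{Slice}$ has slices as objects, $\mathsf{Slice}(X,Y)=\mathcal{P}(\mathcal{C}[X,Y])$ (the powerset), composition $T\circ S:=T\cap S$, identities $1_X=\mathcal{C}[X,X]$. For slices $X,Y$, $(X\vee Y)(-)$ is the presheaf with $(X\vee Y)(Z):=\mathcal{P}(\mathcal{C}[Z,X]\cup\mathcal{C}[Z,Y])$ and $(X\vee Y)(U:Z'\to Z):C\mapsto C\cap U$. *)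

theory Defs
  imports "HOL-Analysis.Analysis"
begin

fun dderiv :: "'a set \<Rightarrow> ('a::real_normed_vector) list \<Rightarrow> ('a \<Rightarrow> 'b::real_normed_vector) \<Rightarrow> 'a \<Rightarrow> 'b" where
  "dderiv S [] f = f"
| "dderiv S (v # vs) f = (\<lambda>x. frechet_derivative (dderiv S vs f) (at x within S) v)"

text \<open>f is smooth on S: all iterated derivatives exist (hence are continuous) on S.\<close>
definition smooth_on :: "'a set \<Rightarrow> ('a::real_normed_vector \<Rightarrow> 'b::real_normed_vector) \<Rightarrow> bool" where
  "smooth_on S f \<longleftrightarrow> (\<forall>vs. \<forall>x\<in>S. dderiv S vs f differentiable (at x within S))"

type_synonym ('p, 'n) chart = "'p set \<times> ('p \<Rightarrow> real ^ 'n)"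

definition trans_map :: "('p, 'n) chart \<Rightarrow> ('p, 'n) chart \<Rightarrow> real ^ 'n \<Rightarrow> real ^ 'n" where
  "trans_map c d = snd d \<circ> inv_into (fst c) (snd c)"

definition smooth_atlas :: "('p::topological_space, 'n::finite) chart set \<Rightarrow> bool" where
  "smooth_atlas A \<longleftrightarrow>
     (\<Union>(fst ` A) = UNIV) \<and>
     (\<forall>(U, \<phi>)\<in>A. open U \<and> open (\<phi> ` U) \<and> (\<exists>\<psi>. homeomorphism U (\<phi> ` U) \<phi> \<psi>)) \<and>
     (\<forall>c\<in>A. \<forall>d\<in>A. smooth_on (snd c ` (fst c \<inter> fst d)) (trans_map c d))"

text \<open>A symmetric bilinear form of Lorentzian signature (-,+,...,+): it admits an
  orthonormal basis with exactly one negative vector.\<close>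
definition lorentzian_form :: "(real ^ 'n \<Rightarrow> real ^ 'n \<Rightarrow> real) \<Rightarrow> bool" where
  "lorentzian_form B \<longleftrightarrow> bilinear B \<and> (\<forall>u v. B u v = B v u) \<and>
     (\<exists>(e :: 'n \<Rightarrow> real ^ 'n) i0. span (range e) = UNIV \<and>
        (\<forall>i j. i \<noteq> j \<longrightarrow> B (e i) (e j) = 0) \<and> B (e i0) (e i0) = -1 \<and>
        (\<forall>i. i \<noteq> i0 \<longrightarrow> B (e i) (e i) = 1))"

text \<open>g c x u v: the metric at the point with coordinates x in chart c, applied to
  coordinate vectors u, v.  T c x: the coordinate expression of the time-orientation
  vector field in chart c.\<close>
definition time_oriented_lorentzian ::
  "('p::topological_space, 'n::finite) chart set
   \<Rightarrow> (('p, 'n) chart \<Rightarrow> real ^ 'n \<Rightarrow> real ^ 'n \<Rightarrow> real ^ 'n \<Rightarrow> real)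
   \<Rightarrow> (('p, 'n) chart \<Rightarrow> real ^ 'n \<Rightarrow> real ^ 'n) \<Rightarrow> bool" where
  "time_oriented_lorentzian A g T \<longleftrightarrow>
     smooth_atlas A \<and> connected (UNIV :: 'p set) \<and>
     (\<forall>c\<in>A. \<forall>x\<in>snd c ` fst c. lorentzian_form (g c x)) \<and>
     (\<forall>c\<in>A. \<forall>u v. smooth_on (snd c ` fst c) (\<lambda>x. g c x u v)) \<and>
     (\<forall>c\<in>A. \<forall>d\<in>A. \<forall>p\<in>fst c \<inter> fst d. \<forall>u v.
        g c (snd c p) u v =
        g d (snd d p) (frechet_derivative (trans_map c d) (at (snd c p)) u)
                      (frechet_derivative (trans_map c d) (at (snd c p)) v)) \<and>
     (\<forall>c\<in>A. continuous_on (snd c ` fst c) (T c) \<and>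
        (\<forall>x\<in>snd c ` fst c. g c x (T c x) (T c x) < 0)) \<and>
     (\<forall>c\<in>A. \<forall>d\<in>A. \<forall>p\<in>fst c \<inter> fst d.
        T d (snd d p) = frechet_derivative (trans_map c d) (at (snd c p)) (T c (snd c p)))"

definition smooth_path :: "('p::topological_space, 'n::finite) chart set \<Rightarrow> real set \<Rightarrow> (real \<Rightarrow> 'p) \<Rightarrow> bool" where
  "smooth_path A \<iota> \<mu> \<longleftrightarrow> is_interval \<iota> \<and> interior \<iota> \<noteq> {} \<and> continuous_on \<iota> \<mu> \<and>
     (\<forall>c\<in>A. smooth_on {t\<in>\<iota>. \<mu> t \<in> fst c} (snd c \<circ> \<mu>))"

definition velocity :: "('p, 'n) chart \<Rightarrow> real set \<Rightarrow> (real \<Rightarrow> 'p) \<Rightarrow> real \<Rightarrow> real ^ 'n" where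
  "velocity c \<iota> \<mu> t = vector_derivative (snd c \<circ> \<mu>) (at t within {s\<in>\<iota>. \<mu> s \<in> fst c})"

text \<open>Smooth regular path whose tangent is everywhere causal (timelike or null) and
  future-directed.\<close>
definition fd_causal_path ::
  "('p::topological_space, 'n::finite) chart set
   \<Rightarrow> (('p, 'n) chart \<Rightarrow> real ^ 'n \<Rightarrow> real ^ 'n \<Rightarrow> real ^ 'n \<Rightarrow> real)
   \<Rightarrow> (('p, 'n) chart \<Rightarrow> real ^ 'n \<Rightarrow> real ^ 'n) \<Rightarrow> real set \<Rightarrow> (real \<Rightarrow> 'p) \<Rightarrow> bool" where
  "fd_causal_path A g T \<iota> \<mu> \<longleftrightarrow> smooth_path A \<iota> \<mu> \<and>
     (\<forall>t\<in>\<iota>. \<forall>c\<in>A. \<mu> t \<in> fst c \<longrightarrow>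
        (let x = snd c (\<mu> t); v = velocity c \<iota> \<mu> t in
           v \<noteq> 0 \<and> g c x v v \<le> 0 \<and> g c x (T c x) v < 0))"

definition reparam :: "real set \<Rightarrow> (real \<Rightarrow> 'p) \<Rightarrow> real set \<Rightarrow> (real \<Rightarrow> 'p) \<Rightarrow> bool" where
  "reparam \<kappa> \<nu> \<iota> \<mu> \<longleftrightarrow> is_interval \<kappa> \<and>
     (\<exists>h. bij_betw h \<kappa> \<iota> \<and> strict_mono_on \<kappa> h \<and> smooth_on \<kappa> h \<and>
          smooth_on \<iota> (inv_into \<kappa> h) \<and> (\<forall>s\<in>\<kappa>. \<nu> s = \<mu> (h s)))"

text \<open>The causal curve represented by a path: its class of reparametrisations.\<close>
definition curve_of :: "real set \<Rightarrow> (real \<Rightarrow> 'p) \<Rightarrow> (real set \<times> (real \<Rightarrow> 'p)) set" where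
  "curve_of \<iota> \<mu> = {(\<kappa>, \<nu>). reparam \<kappa> \<nu> \<iota> \<mu>}"

definition fd_causal_curves where
  "fd_causal_curves A g T = {curve_of \<iota> \<mu> | \<iota> \<mu>. fd_causal_path A g T \<iota> \<mu>}"

definition causal_prec where
  "causal_prec A g T x y \<longleftrightarrow> x = y \<or>
     (\<exists>a b \<mu>. a < b \<and> fd_causal_path A g T {a..b} \<mu> \<and> \<mu> a = x \<and> \<mu> b = y)"

definition spacelike where
  "spacelike A g T S \<longleftrightarrow> (\<forall>x\<in>S. \<forall>y\<in>S. x \<noteq> y \<longrightarrow> \<not> causal_prec A g T x y)"

definition slice where
  "slice A g T S \<longleftrightarrow> closed S \<and> spacelike A g T S"

text \<open>C[P,Q]: future-directed causal curves passing through P and then Q.\<close>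
definition curves_through where
  "curves_through A g T P Q = {C \<in> fd_causal_curves A g T.
     \<forall>(\<iota>, \<mu>)\<in>C. (\<exists>q\<in>\<iota>. \<mu> q \<in> Q) \<and> (\<forall>q\<in>\<iota>. \<mu> q \<in> Q \<longrightarrow> (\<exists>p\<in>\<iota>. p \<le> q \<and> \<mu> p \<in> P))}"

definition Slice_hom where
  "Slice_hom A g T X Y = Pow (curves_through A g T X Y)"

definition Slice_comp :: "'c set \<Rightarrow> 'c set \<Rightarrow> 'c set" where
  "Slice_comp T' S = T' \<inter> S"

text \<open>Object part and morphism part of the presheaf (X \<or> Y)(-).\<close>
definition join_ob where
  "join_ob A g T X Y Z = Pow (curves_through A g T Z X \<union> curves_through A g T Z Y)"

definition join_map :: "'c set \<Rightarrow> 'c set \<Rightarrow> 'c set" where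
  "join_map U C = C \<inter> U"

definition represents where
  "represents A g T Fob Fmap R \<longleftrightarrow> slice A g T R \<and>
     (\<exists>\<eta>. (\<forall>Z. slice A g T Z \<longrightarrow> bij_betw (\<eta> Z) (Slice_hom A g T Z R) (Fob Z)) \<and>
          (\<forall>Z Z' U S. slice A g T Z \<longrightarrow> slice A g T Z' \<longrightarrow> U \<in> Slice_hom A g T Z' Z \<longrightarrow>
              S \<in> Slice_hom A g T Z R \<longrightarrow>
              \<eta> Z' (Slice_comp S U) = Fmap U (\<eta> Z S)))"

end

theory Submission
  imports Defs
begin

lemma real_deriv_unique:
  fixes f :: "real \<Rightarrow> 'b::real_normed_vector"
  assumes nb: "at x within S \<noteq> bot"
    and d1: "(f has_derivative D1) (at x within S)"
    and d2: "(f has_derivative D2) (at x within S)"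
  shows "D1 = D2"
proof -
  have l1: "linear D1" and l2: "linear D2" using d1 d2 has_derivative_linear by blast+
  have e1: "D1 = (\<lambda>h. h *\<^sub>R D1 1)"
    by (rule ext) (metis l1 linear_scale mult.right_neutral real_scaleR_def)
  have e2: "D2 = (\<lambda>h. h *\<^sub>R D2 1)"
    by (rule ext) (metis l2 linear_scale mult.right_neutral real_scaleR_def)
  have "(f has_vector_derivative D1 1) (at x within S)"
    using d1 e1 by (simp add: has_vector_derivative_def)
  moreover have "(f has_vector_derivative D2 1) (at x within S)"
    using d2 e2 by (simp add: has_vector_derivative_def)
  ultimately have "D1 1 = D2 1" using vector_derivative_unique_within nb by blast
  then show ?thesis using e1 e2 by metis
qed

lemma dderiv_restrict:
  fixes f :: "real \<Rightarrow> 'b::real_normed_vector"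
  assumes sub: "S \<subseteq> S0"
    and nb: "\<And>x. x \<in> S \<Longrightarrow> at x within S \<noteq> bot"
    and sm: "smooth_on S0 f"
  shows "\<forall>x\<in>S. dderiv S vs f x = dderiv S0 vs f x \<and> dderiv S vs f differentiable (at x within S)"
proof (induction vs)
  case Nil
  show ?case
  proof
    fix x assume x: "x \<in> S"
    have "f differentiable (at x within S0)" using sm x sub unfolding smooth_on_def
      by (metis dderiv.simps(1) subsetD)
    then show "dderiv S [] f x = dderiv S0 [] f x \<and> dderiv S [] f differentiable (at x within S)"
      by (simp add: differentiable_within_subset sub)
  qed
next
  case (Cons v vs)
  have eq: "\<And>y. y \<in> S \<Longrightarrow> dderiv S vs f y = dderiv S0 vs f y" using Cons by blast
  have key: "\<And>x. x \<in> S \<Longrightarrow> (dderiv S vs f has_derivative frechet_derivative (dderiv S0 vs f) (at x within S0)) (at x within S)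
       \<and> frechet_derivative (dderiv S vs f) (at x within S) = frechet_derivative (dderiv S0 vs f) (at x within S0)"
  proof -
    fix x assume x: "x \<in> S"
    have "dderiv S0 vs f differentiable (at x within S0)" using sm x sub unfolding smooth_on_def by blast
    then have h0: "(dderiv S0 vs f has_derivative frechet_derivative (dderiv S0 vs f) (at x within S0)) (at x within S0)"
      using frechet_derivative_works by blast
    then have "(dderiv S0 vs f has_derivative frechet_derivative (dderiv S0 vs f) (at x within S0)) (at x within S)"
      using has_derivative_subset sub by blast
    then have h1: "(dderiv S vs f has_derivative frechet_derivative (dderiv S0 vs f) (at x within S0)) (at x within S)"
      by (rule has_derivative_transform_within[where d=1]) (use x eq in auto)
    then have "dderiv S vs f differentiable (at x within S)" by (auto simp: differentiable_def)
    then have "(dderiv S vs f has_derivative frechet_derivative (dderiv S vs f) (at x within S)) (at x within S)"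
      using frechet_derivative_works by blast
    with h1 show "?thesis x" using real_deriv_unique nb x by metis
  qed
  show ?case
  proof
    fix x assume x: "x \<in> S"
    show "dderiv S (v # vs) f x = dderiv S0 (v # vs) f x \<and> dderiv S (v # vs) f differentiable (at x within S)"
    proof
      show "dderiv S (v # vs) f x = dderiv S0 (v # vs) f x" using key x by simp
      have "\<And>y. y \<in> S \<Longrightarrow> dderiv S (v # vs) f y = dderiv S0 (v # vs) f y" using key by simp
      moreover have "dderiv S0 (v # vs) f differentiable (at x within S0)" using sm x sub unfolding smooth_on_def by blast
      then have "dderiv S0 (v # vs) f differentiable (at x within S)" using differentiable_within_subset sub by blast
      then obtain D where "(dderiv S0 (v # vs) f has_derivative D) (at x within S)" by (auto simp: differentiable_def)
      then have "(dderiv S (v # vs) f has_derivative D) (at x within S)"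
        by (rule has_derivative_transform_within[where d=1]) (use x calculation in auto)
      then show "dderiv S (v # vs) f differentiable (at x within S)" by (auto simp: differentiable_def)
    qed
  qed
qed


lemma nb_lemma:
  fixes \<mu> :: "real \<Rightarrow> 'p::topological_space"
  assumes ab: "a < b" and cont: "continuous_on {a..b} \<mu>" and U: "open U"
    and x: "x \<in> {t\<in>{a..b}. \<mu> t \<in> U}"
  shows "at x within {t\<in>{a..b}. \<mu> t \<in> U} \<noteq> bot"
proof -
  let ?S = "{t\<in>{a..b}. \<mu> t \<in> U}"
  have "openin (top_of_set {a..b}) ({a..b} \<inter> \<mu> -` U)"
    using continuous_openin_preimage_gen[OF cont U] .
  moreover have "{a..b} \<inter> \<mu> -` U = ?S" by auto
  ultimately have "openin (top_of_set {a..b}) ?S" by simp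
  then obtain e where e: "e > 0" "\<And>y. y \<in> {a..b} \<Longrightarrow> dist y x < e \<Longrightarrow> y \<in> ?S"
    using x unfolding openin_euclidean_subtopology_iff by blast
  have "x islimpt ?S"
    unfolding islimpt_approachable
  proof (intro allI impI)
    fix d :: real assume d: "d > 0"
    define r where "r = min e d / 2"
    have r: "r > 0" "r < e" "r < d" using e d by (auto simp: r_def)
    show "\<exists>x'\<in>?S. x' \<noteq> x \<and> dist x' x < d"
    proof (cases "x < b")
      case True
      define y where "y = min (x + r) b"
      have y: "y \<in> {a..b}" "y \<noteq> x" "dist y x < e" "dist y x < d"
        using True x r by (auto simp: y_def dist_real_def)
      then show ?thesis using e by blast
    next
      case False
      define y where "y = max (x - r) a"
      have y: "y \<in> {a..b}" "y \<noteq> x" "dist y x < e" "dist y x < d"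
        using False x r ab by (auto simp: y_def dist_real_def)
      then show ?thesis using e by blast
    qed
  qed
  then show ?thesis by (simp add: trivial_limit_within)
qed

lemma fd_restrict:
  assumes fd: "fd_causal_path A g T \<iota> \<mu>" and ab: "a < b" "a \<in> \<iota>" "b \<in> \<iota>"
    and op: "\<forall>c\<in>A. open (fst c)"
  shows "fd_causal_path A g T {a..b} \<mu>"
proof -
  have sp: "smooth_path A \<iota> \<mu>" using fd unfolding fd_causal_path_def by (rule conjunct1)
  have ii: "is_interval \<iota>" and cont0: "continuous_on \<iota> \<mu>"
    and smc: "\<And>c. c \<in> A \<Longrightarrow> smooth_on {t\<in>\<iota>. \<mu> t \<in> fst c} (snd c \<circ> \<mu>)"
  proof -
    have "is_interval \<iota> \<and> interior \<iota> \<noteq> {} \<and> continuous_on \<iota> \<mu> \<and>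
     (\<forall>c\<in>A. smooth_on {t\<in>\<iota>. \<mu> t \<in> fst c} (snd c \<circ> \<mu>))"
      using sp unfolding smooth_path_def .
    then show "is_interval \<iota>" "continuous_on \<iota> \<mu>" "\<And>c. c \<in> A \<Longrightarrow> smooth_on {t\<in>\<iota>. \<mu> t \<in> fst c} (snd c \<circ> \<mu>)"
      by blast+
  qed
  have sub: "{a..b} \<subseteq> \<iota>"
  proof
    fix x assume "x \<in> {a..b}"
    then have "a \<le> x" "x \<le> b" by simp_all
    then show "x \<in> \<iota>" using is_interval_1[THEN iffD1, OF ii] ab(2,3) by blast
  qed
  have cont: "continuous_on {a..b} \<mu>" using continuous_on_subset[OF cont0 sub] .
  have nb: "\<And>c x. c \<in> A \<Longrightarrow> x \<in> {t\<in>{a..b}. \<mu> t \<in> fst c} \<Longrightarrow> at x within {t\<in>{a..b}. \<mu> t \<in> fst c} \<noteq> bot"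
  proof -
    fix c x assume c: "c \<in> A" and x: "x \<in> {t\<in>{a..b}. \<mu> t \<in> fst c}"
    have "open (fst c)" using op c by simp
    from nb_lemma[OF ab(1) cont this x] show "at x within {t\<in>{a..b}. \<mu> t \<in> fst c} \<noteq> bot" .
  qed
  have subS: "\<And>c. {t \<in> {a..b}. \<mu> t \<in> fst c} \<subseteq> {t \<in> \<iota>. \<mu> t \<in> fst c}" using sub by auto
  have R: "\<And>c vs. c \<in> A \<Longrightarrow> \<forall>x\<in>{t\<in>{a..b}. \<mu> t \<in> fst c}.
      dderiv {t\<in>{a..b}. \<mu> t \<in> fst c} vs (snd c \<circ> \<mu>) x = dderiv {t\<in>\<iota>. \<mu> t \<in> fst c} vs (snd c \<circ> \<mu>) x
      \<and> dderiv {t\<in>{a..b}. \<mu> t \<in> fst c} vs (snd c \<circ> \<mu>) differentiable (at x within {t\<in>{a..b}. \<mu> t \<in> fst c})"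
  proof -
    fix c vs assume c: "c \<in> A"
    show "?thesis c vs"
      by (rule dderiv_restrict[OF subS nb[OF c] smc[OF c]])
  qed
  have sm2: "\<forall>c\<in>A. smooth_on {t\<in>{a..b}. \<mu> t \<in> fst c} (snd c \<circ> \<mu>)"
    unfolding smooth_on_def
  proof (intro ballI allI)
    fix c vs x assume c: "c \<in> A" and x: "x \<in> {t\<in>{a..b}. \<mu> t \<in> fst c}"
    from R[OF c, of vs] x
    show "dderiv {t\<in>{a..b}. \<mu> t \<in> fst c} vs (snd c \<circ> \<mu>) differentiable (at x within {t\<in>{a..b}. \<mu> t \<in> fst c})"
      by blast
  qed
  have sp2: "smooth_path A {a..b} \<mu>"
    unfolding smooth_path_def using ab cont sm2 by simp
  have vel: "\<And>c t. c \<in> A \<Longrightarrow> t \<in> {a..b} \<Longrightarrow> \<mu> t \<in> fst c \<Longrightarrow> velocity c {a..b} \<mu> t = velocity c \<iota> \<mu> t"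
  proof -
    fix c t assume c: "c \<in> A" and t: "t \<in> {a..b}" "\<mu> t \<in> fst c"
    let ?S = "{s\<in>{a..b}. \<mu> s \<in> fst c}"
    let ?W = "{s\<in>\<iota>. \<mu> s \<in> fst c}"
    have tS: "t \<in> ?S" using t by blast
    have tS0: "t \<in> ?W" using subS tS by blast
    have "\<forall>vs. \<forall>x\<in>?W. dderiv ?W vs (snd c \<circ> \<mu>) differentiable (at x within ?W)"
      using smc[OF c] unfolding smooth_on_def .
    then have "dderiv ?W [] (snd c \<circ> \<mu>) differentiable (at t within ?W)"
      using tS0 by blast
    then have "(snd c \<circ> \<mu>) differentiable (at t within ?W)" by simp
    then have h: "((snd c \<circ> \<mu>) has_vector_derivative vector_derivative (snd c \<circ> \<mu>) (at t within ?W)) (at t within ?W)"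
      by (rule vector_derivative_works[THEN iffD1])
    have h1: "((snd c \<circ> \<mu>) has_vector_derivative vector_derivative (snd c \<circ> \<mu>) (at t within ?W)) (at t within ?S)"
      by (rule has_vector_derivative_within_subset[OF h subS])
    then have "(snd c \<circ> \<mu>) differentiable (at t within ?S)"
      by (rule differentiableI_vector)
    then have h2: "((snd c \<circ> \<mu>) has_vector_derivative vector_derivative (snd c \<circ> \<mu>) (at t within ?S)) (at t within ?S)"
      by (rule vector_derivative_works[THEN iffD1])
    have "at t within ?S \<noteq> bot" using nb[OF c tS] .
    from vector_derivative_unique_within[OF this h2 h1]
    show "velocity c {a..b} \<mu> t = velocity c \<iota> \<mu> t"
      unfolding velocity_def .
  qed
  have P: "\<forall>t\<in>\<iota>. \<forall>c\<in>A. \<mu> t \<in> fst c \<longrightarrow>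
        (let x = snd c (\<mu> t); v = velocity c \<iota> \<mu> t in
           v \<noteq> 0 \<and> g c x v v \<le> 0 \<and> g c x (T c x) v < 0)"
    using fd unfolding fd_causal_path_def by (rule conjunct2)
  show ?thesis
    unfolding fd_causal_path_def
  proof (intro conjI sp2 ballI impI)
    fix t c assume t: "t \<in> {a..b}" and c: "c \<in> A" and m: "\<mu> t \<in> fst c"
    have "t \<in> \<iota>" using t sub by blast
    then have "let x = snd c (\<mu> t); v = velocity c \<iota> \<mu> t in
           v \<noteq> 0 \<and> g c x v v \<le> 0 \<and> g c x (T c x) v < 0"
      using P c m by blast
    then show "let x = snd c (\<mu> t); v = velocity c {a..b} \<mu> t in
           v \<noteq> 0 \<and> g c x v v \<le> 0 \<and> g c x (T c x) v < 0"
      by (simp only: vel[OF c t m])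
  qed
qed

lemma curve_image:
  assumes "(\<kappa>, \<nu>) \<in> curve_of \<iota> \<mu>"
  shows "\<nu> ` \<kappa> = \<mu> ` \<iota>"
proof -
  obtain h where h: "bij_betw h \<kappa> \<iota>" "\<forall>s\<in>\<kappa>. \<nu> s = \<mu> (h s)"
    using assms unfolding curve_of_def reparam_def by auto
  have "\<nu> ` \<kappa> = \<mu> ` (h ` \<kappa>)" using h(2) by (auto simp: image_iff)
  then show ?thesis using h(1) by (simp add: bij_betw_def)
qed

lemma through_mono:
  assumes op: "\<forall>c\<in>A. open (fst c)"
    and sl: "spacelike A g T (Q \<union> Q')"
    and C: "C \<in> curves_through A g T Z Q"
  shows "C \<in> curves_through A g T Z (Q \<union> Q')"
proof -
  have Cf: "C \<in> fd_causal_curves A g T" using C unfolding curves_through_def by blast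
  then obtain \<iota> \<mu> where C_eq: "C = curve_of \<iota> \<mu>" and fd: "fd_causal_path A g T \<iota> \<mu>"
    unfolding fd_causal_curves_def by blast
  have CQ: "\<forall>(\<kappa>, \<nu>)\<in>C. (\<exists>q\<in>\<kappa>. \<nu> q \<in> Q) \<and> (\<forall>q\<in>\<kappa>. \<nu> q \<in> Q \<longrightarrow> (\<exists>p\<in>\<kappa>. p \<le> q \<and> \<nu> p \<in> Z))"
    using C unfolding curves_through_def by blast
  have "\<forall>(\<kappa>, \<nu>)\<in>C. (\<exists>q\<in>\<kappa>. \<nu> q \<in> Q \<union> Q') \<and> (\<forall>q\<in>\<kappa>. \<nu> q \<in> Q \<union> Q' \<longrightarrow> (\<exists>p\<in>\<kappa>. p \<le> q \<and> \<nu> p \<in> Z))"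
  proof (clarify)
    fix \<kappa> \<nu> assume kn: "(\<kappa>, \<nu>) \<in> C"
    obtain q' where q': "q' \<in> \<kappa>" "\<nu> q' \<in> Q" using CQ kn by blast
    have Z: "\<And>q. q \<in> \<kappa> \<Longrightarrow> \<nu> q \<in> Q \<Longrightarrow> \<exists>p\<in>\<kappa>. p \<le> q \<and> \<nu> p \<in> Z" using CQ kn by blast
    obtain h where h: "strict_mono_on \<kappa> h" "bij_betw h \<kappa> \<iota>" "\<forall>s\<in>\<kappa>. \<nu> s = \<mu> (h s)"
      using kn unfolding C_eq curve_of_def reparam_def by auto
    have hi: "\<And>s. s \<in> \<kappa> \<Longrightarrow> h s \<in> \<iota>" using h(2) bij_betwE by blast
    have prec: "\<And>s s'. s \<in> \<kappa> \<Longrightarrow> s' \<in> \<kappa> \<Longrightarrow> s < s' \<Longrightarrow> causal_prec A g T (\<nu> s) (\<nu> s')"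
    proof -
      fix s s' assume s: "s \<in> \<kappa>" "s' \<in> \<kappa>" "s < s'"
      have lt: "h s < h s'" using h(1) s unfolding strict_mono_on_def by blast
      have "fd_causal_path A g T {h s..h s'} \<mu>"
        by (rule fd_restrict[OF fd lt hi[OF s(1)] hi[OF s(2)] op])
      then show "causal_prec A g T (\<nu> s) (\<nu> s')"
        unfolding causal_prec_def using lt h(3) s by metis
    qed
    show "(\<exists>q\<in>\<kappa>. \<nu> q \<in> Q \<union> Q') \<and> (\<forall>q\<in>\<kappa>. \<nu> q \<in> Q \<union> Q' \<longrightarrow> (\<exists>p\<in>\<kappa>. p \<le> q \<and> \<nu> p \<in> Z))"
    proof (intro conjI ballI impI)
      show "\<exists>q\<in>\<kappa>. \<nu> q \<in> Q \<union> Q'" using q' by blast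
    next
      fix q assume q: "q \<in> \<kappa>" "\<nu> q \<in> Q \<union> Q'"
      show "\<exists>p\<in>\<kappa>. p \<le> q \<and> \<nu> p \<in> Z"
      proof (cases "\<nu> q \<in> Q")
        case True
        then show ?thesis using Z q by blast
      next
        case False
        then have ne: "\<nu> q \<noteq> \<nu> q'" using q'(2) by metis
        then have "q \<noteq> q'" by blast
        then consider "q < q'" | "q' < q" by linarith
        then have "causal_prec A g T (\<nu> q) (\<nu> q') \<or> causal_prec A g T (\<nu> q') (\<nu> q)"
          using prec q q' by metis
        moreover have "\<nu> q \<in> Q \<union> Q'" "\<nu> q' \<in> Q \<union> Q'" using q q' by auto
        ultimately have False using sl ne unfolding spacelike_def by metis
        then show ?thesis ..
      qed
    qed
  qed
  then show ?thesis using Cf unfolding curves_through_def by blast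
qed

lemma through_split:
  assumes C: "C \<in> curves_through A g T Z (Q \<union> Q')"
  shows "C \<in> curves_through A g T Z Q \<union> curves_through A g T Z Q'"
proof -
  have Cf: "C \<in> fd_causal_curves A g T" using C unfolding curves_through_def by blast
  then obtain \<iota> \<mu> where C_eq: "C = curve_of \<iota> \<mu>"
    unfolding fd_causal_curves_def by blast
  have CQ: "\<forall>(\<kappa>, \<nu>)\<in>C. (\<exists>q\<in>\<kappa>. \<nu> q \<in> Q \<union> Q') \<and> (\<forall>q\<in>\<kappa>. \<nu> q \<in> Q \<union> Q' \<longrightarrow> (\<exists>p\<in>\<kappa>. p \<le> q \<and> \<nu> p \<in> Z))"
    using C unfolding curves_through_def by blast
  have img: "\<And>\<kappa> \<nu>. (\<kappa>, \<nu>) \<in> C \<Longrightarrow> \<nu> ` \<kappa> = \<mu> ` \<iota>" using curve_image C_eq by blast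
  show ?thesis
  proof (cases "\<mu> ` \<iota> \<inter> Q \<noteq> {}")
    case True
    have "\<forall>(\<kappa>, \<nu>)\<in>C. (\<exists>q\<in>\<kappa>. \<nu> q \<in> Q) \<and> (\<forall>q\<in>\<kappa>. \<nu> q \<in> Q \<longrightarrow> (\<exists>p\<in>\<kappa>. p \<le> q \<and> \<nu> p \<in> Z))"
    proof (clarify)
      fix \<kappa> \<nu> assume kn: "(\<kappa>, \<nu>) \<in> C"
      have "\<nu> ` \<kappa> \<inter> Q \<noteq> {}" using img[OF kn] True by simp
      then have "\<exists>q\<in>\<kappa>. \<nu> q \<in> Q" by blast
      then show "(\<exists>q\<in>\<kappa>. \<nu> q \<in> Q) \<and> (\<forall>q\<in>\<kappa>. \<nu> q \<in> Q \<longrightarrow> (\<exists>p\<in>\<kappa>. p \<le> q \<and> \<nu> p \<in> Z))"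
        using CQ kn by blast
    qed
    then show ?thesis using Cf unfolding curves_through_def by blast
  next
    case False
    have "\<forall>(\<kappa>, \<nu>)\<in>C. (\<exists>q\<in>\<kappa>. \<nu> q \<in> Q') \<and> (\<forall>q\<in>\<kappa>. \<nu> q \<in> Q' \<longrightarrow> (\<exists>p\<in>\<kappa>. p \<le> q \<and> \<nu> p \<in> Z))"
    proof (clarify)
      fix \<kappa> \<nu> assume kn: "(\<kappa>, \<nu>) \<in> C"
      have "\<nu> ` \<kappa> \<inter> Q = {}" using img[OF kn] False by simp
      moreover obtain q where "q \<in> \<kappa>" "\<nu> q \<in> Q \<union> Q'" using CQ kn by blast
      ultimately have "\<exists>q\<in>\<kappa>. \<nu> q \<in> Q'" by blast
      then show "(\<exists>q\<in>\<kappa>. \<nu> q \<in> Q') \<and> (\<forall>q\<in>\<kappa>. \<nu> q \<in> Q' \<longrightarrow> (\<exists>p\<in>\<kappa>. p \<le> q \<and> \<nu> p \<in> Z))"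
        using CQ kn by blast
    qed
    then show ?thesis using Cf unfolding curves_through_def by blast
  qed
qed

theorem mainTheorem13:
  fixes A :: "('p::{t2_space, second_countable_topology}, 'n::finite) chart set"
    and g :: "('p, 'n) chart \<Rightarrow> real ^ 'n \<Rightarrow> real ^ 'n \<Rightarrow> real ^ 'n \<Rightarrow> real"
    and T :: "('p, 'n) chart \<Rightarrow> real ^ 'n \<Rightarrow> real ^ 'n"
    and X Y :: "'p set"
  assumes "time_oriented_lorentzian A g T"
    and "slice A g T X" and "slice A g T Y"
    and "spacelike A g T (X \<union> Y)"
  shows "represents A g T (join_ob A g T X Y) join_map (X \<union> Y)"
proof -
  have "smooth_atlas A" using assms(1) unfolding time_oriented_lorentzian_def by blast
  then have op0: "\<forall>(U, \<phi>)\<in>A. open U \<and> open (\<phi> ` U) \<and> (\<exists>\<psi>. homeomorphism U (\<phi> ` U) \<phi> \<psi>)"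
    unfolding smooth_atlas_def by blast
  have op: "\<forall>c\<in>A. open (fst c)"
  proof
    fix c assume c: "c \<in> A"
    obtain U \<phi> where "c = (U, \<phi>)" by (cases c)
    then show "open (fst c)" using op0 c by auto
  qed
  have sl: "slice A g T (X \<union> Y)"
    using assms(2,3,4) unfolding slice_def by blast
  have sl': "spacelike A g T (Y \<union> X)" using assms(4) by (simp add: Un_commute)
  have eq: "\<And>Z. curves_through A g T Z (X \<union> Y) = curves_through A g T Z X \<union> curves_through A g T Z Y"
  proof
    fix Z
    show "curves_through A g T Z (X \<union> Y) \<subseteq> curves_through A g T Z X \<union> curves_through A g T Z Y"
      using through_split by blast
    show "curves_through A g T Z X \<union> curves_through A g T Z Y \<subseteq> curves_through A g T Z (X \<union> Y)"
    proof
      fix C assume "C \<in> curves_through A g T Z X \<union> curves_through A g T Z Y"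
      then show "C \<in> curves_through A g T Z (X \<union> Y)"
      proof
        assume "C \<in> curves_through A g T Z X"
        then show ?thesis using through_mono[OF op assms(4)] by blast
      next
        assume "C \<in> curves_through A g T Z Y"
        then have "C \<in> curves_through A g T Z (Y \<union> X)" using through_mono[OF op sl'] by blast
        then show ?thesis by (simp add: Un_commute)
      qed
    qed
  qed
  show ?thesis
    unfolding represents_def
  proof (intro conjI sl exI[where x="\<lambda>Z S. S"] allI impI)
    fix Z assume "slice A g T Z"
    show "bij_betw (\<lambda>S. S) (Slice_hom A g T Z (X \<union> Y)) (join_ob A g T X Y Z)"
      unfolding Slice_hom_def join_ob_def eq by (simp add: bij_betw_id[unfolded id_def])
  next
    fix Z Z' U S
    show "Slice_comp S U = join_map U S" by (simp add: Slice_comp_def join_map_def)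
  qed
qed

end
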